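(* Let $\lambda$ be a partition, $\mu\in\mathcal{D}(\lambda)$ and $\nu\in\mathcal{U}(\lambda)$. Then \[ \lim_{q\to1}\gamma_{\nu/\lambda/\mu}(q,q)=(h_\lambda(c_{\mu,\nu}))^2, \] and consequently \[ \lim_{q\to1}\mathcal{P}_\lambda(\mu\rightarrow\nu)|_{t=q}=\lim_{q\to1}\overline{\mathcal{P}}_\lambda(\mu\leftarrow\nu)|_{t=q}=\frac{(H_\lambda)^2}{H_\mu H_\nu}\cdot\frac{1}{(h_\lambda(c_{\mu,\nu}))^2}. \]
   Context: Partitions are Young diagrams in French convention (cells $(x,y)\in\mathbb{Z}_{>0}^2$, $x\le\lambda_y$), $\lambda'$ the conjugate; for $c=(x,y)\in\lambda$, $a_\lambda(c)=\lambda_y-x$, $\ell_\lambda(c)=\lambda'_x-y$, $h_\lambda(c)=a_\lambda(c)+\ell_\lambda(c)+1$, $H_\kappa=\prod_{c\in\kappa}h_\kappa(c)$. $n(\kappa)=\sum_{c\in\kappa}\ell_\kappa(c)$, $n'(\kappa)=\sum_{c\in\kappa}a_\kappa(c)$, $n(\rho/\kappa)=n(\rho)-n(\kappa)$, $n'(\rho/\kappa)=n'(\rho)-n'(\kappa)$. $\mathcal{U}(\lambda)$ (resp. $\mathcal{D}(\lambda)$): partitions obtained by adding (resp. removing) one cell. For $\kappa\subseteq\rho$, $\mathcal{R}_{\rho/\kappa}$ (resp. $\mathcal{C}_{\rho/\kappa}$): cells of $\kappa$ in a row (resp. column) containing a cell of $\rho/\kappa$. $[i,j]=1-q^it^j$.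 For $\kappa\lessdot\rho$ (one-cell difference): $\alpha_{\rho/\kappa}=\prod_{c\in\mathcal{R}_{\rho/\kappa}}\frac{[a_\kappa(c),\ell_\kappa(c)+1]}{[a_\rho(c),\ell_\rho(c)+1]}\prod_{c\in\mathcal{C}_{\rho/\kappa}}\frac{[a_\kappa(c)+1,\ell_\kappa(c)]}{[a_\rho(c)+1,\ell_\rho(c)]}$, $\overline{\alpha}_{\rho/\kappa}=\prod_{c\in\mathcal{R}_{\rho/\kappa}}\frac{[a_\kappa(c)+1,\ell_\kappa(c)]}{[a_\rho(c)+1,\ell_\rho(c)]}\prod_{c\in\mathcal{C}_{\rho/\kappa}}\frac{[a_\kappa(c),\ell_\kappa(c)+1]}{[a_\rho(c),\ell_\rho(c)+1]}$, $\beta=1/\alpha$, $\overline{\beta}=1/\overline{\alpha}$. With $A=n'(\lambda/\mu)-n'(\nu/\lambda)$, $B=n(\nu/\lambda)-n(\lambda/\mu)$: $\gamma_{\nu/\lambda/\mu}(q,t)=\frac{(1-q^At^B)(1-q^{A+1}t^{B-1})}{(1-q)(1-t)}$, $\mathcal{P}_\lambda(\mu\rightarrow\nu)=t^{B-1}\alpha_{\nu/\lambda}\beta_{\lambda/\mu}/\gamma_{\nu/\lambda/\mu}$, $\overline{\mathcal{P}}_\lambda(\mu\leftarrow\nu)=t^{B-1}\overline{\alpha}_{\nu/\lambda}\overline{\beta}_{\lambda/\mu}/\gamma_{\nu/\lambda/\mu}$. The cell $c_{\mu,\nu}$: let $c_1$ be the cell in the row of $\nu/\lambda$ and the column of $\lambda/\mu$,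 and $c_2$ the cell in the column of $\nu/\lambda$ and the row of $\lambda/\mu$; exactly one of them lies in $\lambda$, and that one is $c_{\mu,\nu}$. *)

theory Defs
  imports Complex_Main
begin

text \<open>Partitions are weakly decreasing lists of positive naturals; the row y (1-indexed)
  has length lam!(y-1). Cells are pairs (x,y) with x,y \<ge> 1 (French convention).\<close>

definition is_partition :: "nat list \<Rightarrow> bool" where
  "is_partition lam \<longleftrightarrow> sorted_wrt (\<ge>) lam \<and> 0 \<notin> set lam"

definition prow :: "nat list \<Rightarrow> nat \<Rightarrow> nat" where
  "prow lam y = (if 1 \<le> y \<and> y \<le> length lam then lam ! (y - 1) else 0)"

definition pcol :: "nat list \<Rightarrow> nat \<Rightarrow> nat" where
  "pcol lam x = card {y. 1 \<le> y \<and> y \<le> length lam \<and> x \<le> prow lam y}"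

definition cells :: "nat list \<Rightarrow> (nat \<times> nat) set" where
  "cells lam = {(x, y). 1 \<le> y \<and> 1 \<le> x \<and> x \<le> prow lam y}"

definition arm :: "nat list \<Rightarrow> nat \<times> nat \<Rightarrow> nat" where
  "arm lam c = prow lam (snd c) - fst c"

definition leg :: "nat list \<Rightarrow> nat \<times> nat \<Rightarrow> nat" where
  "leg lam c = pcol lam (fst c) - snd c"

definition hook :: "nat list \<Rightarrow> nat \<times> nat \<Rightarrow> nat" where
  "hook lam c = arm lam c + leg lam c + 1"

definition hookprod :: "nat list \<Rightarrow> nat" where
  "hookprod lam = (\<Prod>c\<in>cells lam. hook lam c)"

definition nleg :: "nat list \<Rightarrow> nat" where
  "nleg lam = (\<Sum>c\<in>cells lam. leg lam c)"

definition narm :: "nat list \<Rightarrow> nat" where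
  "narm lam = (\<Sum>c\<in>cells lam. arm lam c)"

definition covers :: "nat list \<Rightarrow> nat list \<Rightarrow> bool" where
  "covers kappa rho \<longleftrightarrow> is_partition kappa \<and> is_partition rho \<and>
     cells kappa \<subseteq> cells rho \<and> card (cells rho - cells kappa) = 1"

definition Ups :: "nat list \<Rightarrow> nat list set" where
  "Ups lam = {nu. covers lam nu}"

definition Downs :: "nat list \<Rightarrow> nat list set" where
  "Downs lam = {mu. covers mu lam}"

definition Rset :: "nat list \<Rightarrow> nat list \<Rightarrow> (nat \<times> nat) set" where
  "Rset rho kappa = {c \<in> cells kappa. \<exists>d \<in> cells rho - cells kappa. snd d = snd c}"

definition Cset :: "nat list \<Rightarrow> nat list \<Rightarrow> (nat \<times> nat) set" where
  "Cset rho kappa = {c \<in> cells kappa. \<exists>d \<in> cells rho - cells kappa. fst d = fst c}"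

definition br :: "nat \<Rightarrow> nat \<Rightarrow> real \<Rightarrow> real \<Rightarrow> real" where
  "br i j q t = 1 - q ^ i * t ^ j"

definition alpha :: "nat list \<Rightarrow> nat list \<Rightarrow> real \<Rightarrow> real \<Rightarrow> real" where
  "alpha rho kappa q t =
     (\<Prod>c\<in>Rset rho kappa. br (arm kappa c) (leg kappa c + 1) q t / br (arm rho c) (leg rho c + 1) q t) *
     (\<Prod>c\<in>Cset rho kappa. br (arm kappa c + 1) (leg kappa c) q t / br (arm rho c + 1) (leg rho c) q t)"

definition alphabar :: "nat list \<Rightarrow> nat list \<Rightarrow> real \<Rightarrow> real \<Rightarrow> real" where
  "alphabar rho kappa q t =
     (\<Prod>c\<in>Rset rho kappa. br (arm kappa c + 1) (leg kappa c) q t / br (arm rho c + 1) (leg rho c) q t) *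
     (\<Prod>c\<in>Cset rho kappa. br (arm kappa c) (leg kappa c + 1) q t / br (arm rho c) (leg rho c + 1) q t)"

definition beta :: "nat list \<Rightarrow> nat list \<Rightarrow> real \<Rightarrow> real \<Rightarrow> real" where
  "beta rho kappa q t = 1 / alpha rho kappa q t"

definition betabar :: "nat list \<Rightarrow> nat list \<Rightarrow> real \<Rightarrow> real \<Rightarrow> real" where
  "betabar rho kappa q t = 1 / alphabar rho kappa q t"

definition expA :: "nat list \<Rightarrow> nat list \<Rightarrow> nat list \<Rightarrow> int" where
  "expA nu lam mu = (int (narm lam) - int (narm mu)) - (int (narm nu) - int (narm lam))"

definition expB :: "nat list \<Rightarrow> nat list \<Rightarrow> nat list \<Rightarrow> int" where
  "expB nu lam mu = (int (nleg nu) - int (nleg lam)) - (int (nleg lam) - int (nleg mu))"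

definition gamma :: "nat list \<Rightarrow> nat list \<Rightarrow> nat list \<Rightarrow> real \<Rightarrow> real \<Rightarrow> real" where
  "gamma nu lam mu q t =
     (let A = expA nu lam mu; B = expB nu lam mu in
      (1 - q powi A * t powi B) * (1 - q powi (A + 1) * t powi (B - 1)) / ((1 - q) * (1 - t)))"

definition Pfwd :: "nat list \<Rightarrow> nat list \<Rightarrow> nat list \<Rightarrow> real \<Rightarrow> real \<Rightarrow> real" where
  "Pfwd lam mu nu q t =
     t powi (expB nu lam mu - 1) * alpha nu lam q t * beta lam mu q t / gamma nu lam mu q t"

definition Pbwd :: "nat list \<Rightarrow> nat list \<Rightarrow> nat list \<Rightarrow> real \<Rightarrow> real \<Rightarrow> real" where
  "Pbwd lam mu nu q t =
     t powi (expB nu lam mu - 1) * alphabar nu lam q t * betabar lam mu q t / gamma nu lam mu q t"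

definition cmunu :: "nat list \<Rightarrow> nat list \<Rightarrow> nat list \<Rightarrow> nat \<times> nat" where
  "cmunu lam mu nu =
     (let d = the_elem (cells nu - cells lam); e = the_elem (cells lam - cells mu);
          c1 = (fst e, snd d); c2 = (fst d, snd e) in
      if c1 \<in> cells lam then c1 else c2)"

end

theory Submission imports Defs begin

lemma ev_pos: "\<forall>\<^sub>F q in at (1::real). q > 0"
  by (rule order_tendstoD(1)[OF tendsto_ident_at]) simp

lemma ev_ne1: "\<forall>\<^sub>F q in at (1::real). q \<noteq> 1"
  by (simp add: eventually_at_filter)

lemma lim_powi_quot: "((\<lambda>q::real. (1 - q powi N) / (1 - q)) \<longlongrightarrow> of_int N) (at 1)"
proof -
  have "((\<lambda>q::real. q powi N) has_field_derivative (of_int N * 1 powi (N - 1) * 1)) (at 1)"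
    by (rule DERIV_power_int) (auto intro: DERIV_ident)
  hence h1: "((\<lambda>q::real. (q powi N - 1 powi N) / (q - 1)) \<longlongrightarrow> of_int N) (at 1)"
    by (simp add: has_field_derivative_iff)
  have h2: "\<forall>\<^sub>F q in at (1::real). (q powi N - 1 powi N) / (q - 1) = (1 - q powi N) / (1 - q)"
    using ev_ne1 by eventually_elim (simp add: field_simps)
  show ?thesis by (rule Lim_transform_eventually[OF h1 h2])
qed

lemma lim_pow_quot:
  assumes "n \<ge> 1"
  shows "((\<lambda>q::real. (1 - q ^ m) / (1 - q ^ n)) \<longlongrightarrow> real m / real n) (at 1)"
proof -
  have h1: "((\<lambda>q::real. ((1 - q powi int m) / (1 - q)) / ((1 - q powi int n) / (1 - q)))
     \<longlongrightarrow> of_int (int m) / of_int (int n)) (at 1)"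
    by (rule tendsto_divide[OF lim_powi_quot lim_powi_quot]) (use assms in auto)
  have h2: "\<forall>\<^sub>F q in at (1::real). ((1 - q powi int m) / (1 - q)) / ((1 - q powi int n) / (1 - q))
      = (1 - q ^ m) / (1 - q ^ n)"
    using ev_ne1 by eventually_elim simp
  show ?thesis using Lim_transform_eventually[OF h1 h2] by simp
qed

lemma lim_br_quot:
  assumes "i2 + j2 \<ge> 1"
  shows "((\<lambda>q::real. br i1 j1 q q / br i2 j2 q q) \<longlongrightarrow> real (i1 + j1) / real (i2 + j2)) (at 1)"
  using lim_pow_quot[OF assms, of "i1+j1"] by (simp add: br_def power_add)

lemma lim_gamma_aux:
  "((\<lambda>q::real. (1 - q powi A * q powi B) * (1 - q powi (A + 1) * q powi (B - 1)) / ((1 - q) * (1 - q)))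
    \<longlongrightarrow> (of_int (A + B))\<^sup>2) (at 1)"
proof -
  have h1: "((\<lambda>q::real. ((1 - q powi (A+B)) / (1 - q)) * ((1 - q powi (A+B)) / (1 - q)))
     \<longlongrightarrow> (of_int (A+B))\<^sup>2) (at 1)"
    using tendsto_mult[OF lim_powi_quot lim_powi_quot, of "A+B" "A+B"] by (simp add: power2_eq_square)
  have h2: "\<forall>\<^sub>F q in at (1::real). ((1 - q powi (A+B)) / (1 - q)) * ((1 - q powi (A+B)) / (1 - q))
     = (1 - q powi A * q powi B) * (1 - q powi (A + 1) * q powi (B - 1)) / ((1 - q) * (1 - q))"
    using ev_pos
  proof eventually_elim
    case (elim q)
    have "q powi A * q powi B = q powi (A+B)" using elim by (simp add: power_int_add)
    moreover have "q powi (A+1) * q powi (B-1) = q powi (A+B)" using elim by (simp add: power_int_add[symmetric])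
    ultimately show ?case by simp
  qed
  show ?thesis by (rule Lim_transform_eventually[OF h1 h2])
qed


lemma prow_mono:
  assumes "is_partition lam" "1 \<le> i" "i \<le> j"
  shows "prow lam j \<le> prow lam i"
proof (cases "j \<le> length lam \<and> i < j")
  case True
  then show ?thesis using assms
    unfolding prow_def is_partition_def sorted_wrt_iff_nth_less by auto
next
  case False
  then show ?thesis using assms unfolding prow_def by auto
qed

lemma prow_pos: "prow lam y > 0 \<Longrightarrow> 1 \<le> y \<and> y \<le> length lam"
  unfolding prow_def by (auto split: if_splits)

lemma prow0[simp]: "prow lam 0 = 0"
  unfolding prow_def by auto

lemma cells_finite: "finite (cells lam)"
proof -
  have "cells lam \<subseteq> {..sum_list lam} \<times> {..length lam}"
  proof
    fix c assume "c \<in> cells lam"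
    then obtain x y where c: "c = (x,y)" "1 \<le> y" "1 \<le> x" "x \<le> prow lam y" unfolding cells_def by auto
    hence "y \<le> length lam" using prow_pos[of lam y] by auto
    moreover have "prow lam y \<le> sum_list lam"
      using c \<open>y \<le> length lam\<close> unfolding prow_def
      by (auto intro!: member_le_sum_list)
    ultimately show "c \<in> {..sum_list lam} \<times> {..length lam}" using c by auto
  qed
  thus ?thesis by (rule finite_subset) auto
qed

lemma pcol_alt: "1 \<le> x \<Longrightarrow> pcol lam x = card {y. 1 \<le> y \<and> x \<le> prow lam y}"
  unfolding pcol_def
  by (rule arg_cong[where f=card]) (use prow_pos[of lam] in force)

lemma cover_struct: "covers k r \<Longrightarrow> \<exists>x y. cells r - cells k = {(x,y)}"
  unfolding covers_def by (metis card_1_singletonE surj_pair)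

lemma cover_rows:
  assumes "covers k r" "cells r - cells k = {(x,y)}"
  shows "1 \<le> x \<and> 1 \<le> y \<and> prow r y = x \<and> prow k y = x - 1 \<and> (\<forall>y'. y' \<noteq> y \<longrightarrow> prow r y' = prow k y')"
proof -
  have sub: "cells k \<subseteq> cells r" using assms(1) unfolding covers_def by auto
  have d: "(x,y) \<in> cells r" "(x,y) \<notin> cells k" using assms(2) by auto
  hence xy: "1 \<le> x" "1 \<le> y" "x \<le> prow r y" "prow k y < x" unfolding cells_def by auto
  have le: "prow k y' \<le> prow r y'" for y'
  proof (cases "prow k y' = 0")
    case False
    hence "(prow k y', y') \<in> cells k" using prow_pos[of k y'] unfolding cells_def by auto
    thus ?thesis using sub unfolding cells_def by auto
  qed simp
  have eq: "prow r y' = prow k y'" if "y' \<noteq> y" for y'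
  proof (rule ccontr)
    assume "prow r y' \<noteq> prow k y'"
    hence "prow k y' < prow r y'" using le[of y'] by auto
    hence "(prow r y', y') \<in> cells r - cells k" using prow_pos[of r y'] unfolding cells_def by auto
    thus False using assms(2) that by auto
  qed
  have r: "prow r y = x"
  proof (rule ccontr)
    assume "prow r y \<noteq> x"
    hence "(prow r y, y) \<in> cells r - cells k" using xy unfolding cells_def by auto
    thus False using assms(2) \<open>prow r y \<noteq> x\<close> by auto
  qed
  have k: "prow k y = x - 1"
  proof (rule ccontr)
    assume "prow k y \<noteq> x - 1"
    hence "(x - 1, y) \<in> cells r - cells k" using xy r unfolding cells_def by auto
    thus False using assms(2) xy by auto
  qed
  show ?thesis using xy r k eq by auto
qed

lemma cover_insert:
  assumes "covers k r" "cells r - cells k = {(x,y)}"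
  shows "cells r = insert (x,y) (cells k)" "(x,y) \<notin> cells k"
  using assms unfolding covers_def by auto

lemma cover_cols:
  assumes "covers k r" "cells r - cells k = {(x,y)}" "1 \<le> y'"
  shows "x \<le> prow k y' \<longleftrightarrow> y' < y" "x \<le> prow r y' \<longleftrightarrow> y' \<le> y"
proof -
  have pk: "is_partition k" and pr: "is_partition r" using assms(1) unfolding covers_def by auto
  note R = cover_rows[OF assms(1,2)]
  show "x \<le> prow k y' \<longleftrightarrow> y' < y"
  proof
    assume "x \<le> prow k y'"
    moreover have "y \<le> y' \<Longrightarrow> prow k y' \<le> prow k y" using prow_mono[OF pk, of y y'] R by auto
    ultimately show "y' < y" using R by (cases "y \<le> y'") auto
  next
    assume "y' < y"
    thus "x \<le> prow k y'" using R prow_mono[OF pr assms(3), of y] by (metis less_imp_le less_irrefl)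
  qed
  show "x \<le> prow r y' \<longleftrightarrow> y' \<le> y"
  proof
    assume "x \<le> prow r y'"
    moreover have "y < y' \<Longrightarrow> prow k y' \<le> prow k y" using prow_mono[OF pk, of y y'] R by auto
    ultimately show "y' \<le> y" using R by (cases "y < y'") auto
  next
    assume "y' \<le> y"
    thus "x \<le> prow r y'" using R prow_mono[OF pr assms(3), of y] by auto
  qed
qed

lemma cover_pcol:
  assumes "covers k r" "cells r - cells k = {(x,y)}"
  shows "pcol k x = y - 1" "pcol r x = y" "\<And>x'. 1 \<le> x' \<Longrightarrow> x' \<noteq> x \<Longrightarrow> pcol r x' = pcol k x'"
proof -
  note R = cover_rows[OF assms(1,2)]
  have "{y'. 1 \<le> y' \<and> x \<le> prow k y'} = {1..<y}" using cover_cols(1)[OF assms] by auto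
  thus "pcol k x = y - 1" using pcol_alt[of x k] R by simp
  have "{y'. 1 \<le> y' \<and> x \<le> prow r y'} = {1..y}" using cover_cols(2)[OF assms] by auto
  thus "pcol r x = y" using pcol_alt[of x r] R by simp
  fix x' assume x': "1 \<le> x'" "x' \<noteq> x"
  have "{y'. 1 \<le> y' \<and> x' \<le> prow r y'} = {y'. 1 \<le> y' \<and> x' \<le> prow k y'}"
  proof (intro Collect_cong conj_cong refl)
    fix y' show "x' \<le> prow r y' \<longleftrightarrow> x' \<le> prow k y'"
      using R x' by (cases "y' = y") auto
  qed
  thus "pcol r x' = pcol k x'" using pcol_alt[of x' r] pcol_alt[of x' k] x' by simp
qed

lemma cell_col_le:
  assumes "is_partition k" "c \<in> cells k"
  shows "snd c \<le> pcol k (fst c)"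
proof -
  obtain x y where c: "c = (x,y)" "1 \<le> y" "1 \<le> x" "x \<le> prow k y" using assms(2) unfolding cells_def by auto
  have "{1..y} \<subseteq> {y'. 1 \<le> y' \<and> x \<le> prow k y'}"
    using prow_mono[OF assms(1)] c by (auto intro: order_trans)
  moreover have "finite {y'. 1 \<le> y' \<and> x \<le> prow k y'}"
    by (rule finite_subset[of _ "{..length k}"]) (use prow_pos[of k] c in force)+
  ultimately have "card {1..y} \<le> card {y'. 1 \<le> y' \<and> x \<le> prow k y'}" by (rule card_mono[rotated])
  thus ?thesis using c pcol_alt[of x k] by simp
qed

lemma cover_arm:
  assumes "covers k r" "cells r - cells k = {(x,y)}" "c \<in> cells k"
  shows "arm r c = arm k c + (if snd c = y then 1 else 0)"
  using cover_rows[OF assms(1,2)] assms(3) unfolding arm_def cells_def by auto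

lemma cover_leg:
  assumes "covers k r" "cells r - cells k = {(x,y)}" "c \<in> cells k"
  shows "leg r c = leg k c + (if fst c = x then 1 else 0)"
proof -
  have pk: "is_partition k" using assms(1) unfolding covers_def by auto
  have "fst c \<ge> 1" using assms(3) unfolding cells_def by auto
  show ?thesis
  proof (cases "fst c = x")
    case True
    then show ?thesis using cover_rows[OF assms(1,2)] cover_pcol[OF assms(1,2)] cell_col_le[OF pk assms(3)] unfolding leg_def by auto
  next
    case False
    then show ?thesis using cover_pcol(3)[OF assms(1,2) \<open>fst c \<ge> 1\<close>] unfolding leg_def by auto
  qed
qed

lemma cover_new_hook:
  assumes "covers k r" "cells r - cells k = {(x,y)}"
  shows "arm r (x,y) = 0" "leg r (x,y) = 0" "hook r (x,y) = 1"
  using cover_rows[OF assms] cover_pcol[OF assms] unfolding hook_def arm_def leg_def by auto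

lemma cover_row_set:
  assumes "covers k r" "cells r - cells k = {(x,y)}"
  shows "{c \<in> cells k. snd c = y} = {1..x-1} \<times> {y}"
  using cover_rows[OF assms] unfolding cells_def by auto

lemma cover_col_set:
  assumes "covers k r" "cells r - cells k = {(x,y)}"
  shows "{c \<in> cells k. fst c = x} = {x} \<times> {1..<y}"
  using cover_rows[OF assms] cover_cols(1)[OF assms] unfolding cells_def by auto

lemma sum_ind: "finite A \<Longrightarrow> (\<Sum>c\<in>A. f c + (if P c then 1 else 0)) = sum f A + card {c \<in> A. P c}"
  by (simp add: sum.distrib sum.If_cases Int_def conj_commute)

lemma cover_narm:
  assumes "covers k r" "cells r - cells k = {(x,y)}"
  shows "narm r = narm k + (x - 1)"
proof -
  have "narm r = arm r (x,y) + (\<Sum>c\<in>cells k. arm r c)"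
    unfolding narm_def cover_insert[OF assms] using cover_insert(2)[OF assms] cells_finite by simp
  also have "(\<Sum>c\<in>cells k. arm r c) = (\<Sum>c\<in>cells k. arm k c + (if snd c = y then 1 else 0))"
    using cover_arm[OF assms] by (intro sum.cong) auto
  also have "\<dots> = narm k + card {c \<in> cells k. snd c = y}"
    unfolding narm_def by (rule sum_ind[OF cells_finite])
  finally show ?thesis using cover_new_hook[OF assms] cover_row_set[OF assms]
    by (simp add: card_cartesian_product)
qed

lemma cover_nleg:
  assumes "covers k r" "cells r - cells k = {(x,y)}"
  shows "nleg r = nleg k + (y - 1)"
proof -
  have "nleg r = leg r (x,y) + (\<Sum>c\<in>cells k. leg r c)"
    unfolding nleg_def cover_insert[OF assms] using cover_insert(2)[OF assms] cells_finite by simp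
  also have "(\<Sum>c\<in>cells k. leg r c) = (\<Sum>c\<in>cells k. leg k c + (if fst c = x then 1 else 0))"
    using cover_leg[OF assms] by (intro sum.cong) auto
  also have "\<dots> = nleg k + card {c \<in> cells k. fst c = x}"
    unfolding nleg_def by (rule sum_ind[OF cells_finite])
  finally show ?thesis using cover_new_hook[OF assms] cover_col_set[OF assms]
    by (simp add: card_cartesian_product)
qed

lemma cover_Rset:
  assumes "covers k r" "cells r - cells k = {(x,y)}"
  shows "Rset r k = {c \<in> cells k. snd c = y}" "Cset r k = {c \<in> cells k. fst c = x}"
  unfolding Rset_def Cset_def assms(2) by auto

lemma cover_hook_same:
  assumes "covers k r" "cells r - cells k = {(x,y)}" "c \<in> cells k" "snd c \<noteq> y" "fst c \<noteq> x"
  shows "hook r c = hook k c"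
  using cover_arm[OF assms(1-3)] cover_leg[OF assms(1-3)] assms(4,5) unfolding hook_def by simp

lemma cover_prod:
  assumes "covers k r"
  shows "(\<Prod>c\<in>Rset r k. real (hook k c) / real (hook r c)) * (\<Prod>c\<in>Cset r k. real (hook k c) / real (hook r c))
     = real (hookprod k) / real (hookprod r)"
proof -
  obtain x y where xy: "cells r - cells k = {(x,y)}" using cover_struct[OF assms] by blast
  let ?f = "\<lambda>c. real (hook k c) / real (hook r c)"
  have disj: "Rset r k \<inter> Cset r k = {}"
    using cover_Rset[OF assms xy] cover_insert(2)[OF assms xy] by auto
  have fin: "finite (Rset r k)" "finite (Cset r k)"
    using cover_Rset[OF assms xy] cells_finite by auto
  have "(\<Prod>c\<in>Rset r k. ?f c) * (\<Prod>c\<in>Cset r k. ?f c) = (\<Prod>c\<in>Rset r k \<union> Cset r k. ?f c)"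
    by (rule prod.union_disjoint[OF fin disj, symmetric])
  also have "\<dots> = (\<Prod>c\<in>cells k. ?f c)"
  proof (rule prod.mono_neutral_left[OF cells_finite])
    show "Rset r k \<union> Cset r k \<subseteq> cells k" using cover_Rset[OF assms xy] by auto
    show "\<forall>i\<in>cells k - (Rset r k \<union> Cset r k). ?f i = 1"
      using cover_Rset[OF assms xy] cover_hook_same[OF assms xy] by (auto simp: hook_def)
  qed
  also have "\<dots> = real (\<Prod>c\<in>cells k. hook k c) / real (\<Prod>c\<in>cells k. hook r c)"
    by (simp add: prod_dividef)
  also have "(\<Prod>c\<in>cells k. hook r c) = hookprod r"
    unfolding hookprod_def cover_insert[OF assms xy] using cover_insert(2)[OF assms xy] cells_finite
      cover_new_hook[OF assms xy] by simp
  finally show ?thesis unfolding hookprod_def by simp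
qed


lemma lim_alpha:
  assumes "covers k r"
  shows "((\<lambda>q. alpha r k q q) \<longlongrightarrow> real (hookprod k) / real (hookprod r)) (at 1)"
        "((\<lambda>q. alphabar r k q q) \<longlongrightarrow> real (hookprod k) / real (hookprod r)) (at 1)"
proof -
  have e1: "(\<Prod>c\<in>S. real (arm k c + (leg k c + 1)) / real (arm r c + (leg r c + 1)))
         = (\<Prod>c\<in>S. real (hook k c) / real (hook r c))" for S
    by (simp add: hook_def)
  have e2: "(\<Prod>c\<in>S. real (arm k c + 1 + leg k c) / real (arm r c + 1 + leg r c))
         = (\<Prod>c\<in>S. real (hook k c) / real (hook r c))" for S
    by (simp add: hook_def)
  have "((\<lambda>q. alpha r k q q) \<longlongrightarrow>
     (\<Prod>c\<in>Rset r k. real (arm k c + (leg k c + 1)) / real (arm r c + (leg r c + 1))) *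
     (\<Prod>c\<in>Cset r k. real (arm k c + 1 + leg k c) / real (arm r c + 1 + leg r c))) (at 1)"
    unfolding alpha_def by (intro tendsto_mult tendsto_prod lim_br_quot) auto
  thus "((\<lambda>q. alpha r k q q) \<longlongrightarrow> real (hookprod k) / real (hookprod r)) (at 1)"
    unfolding e1 e2 cover_prod[OF assms] .
  have "((\<lambda>q. alphabar r k q q) \<longlongrightarrow>
     (\<Prod>c\<in>Rset r k. real (arm k c + 1 + leg k c) / real (arm r c + 1 + leg r c)) *
     (\<Prod>c\<in>Cset r k. real (arm k c + (leg k c + 1)) / real (arm r c + (leg r c + 1)))) (at 1)"
    unfolding alphabar_def by (intro tendsto_mult tendsto_prod lim_br_quot) auto
  thus "((\<lambda>q. alphabar r k q q) \<longlongrightarrow> real (hookprod k) / real (hookprod r)) (at 1)"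
    unfolding e1 e2 cover_prod[OF assms] .
qed

lemma hookprod_pos: "real (hookprod k) > 0"
  unfolding hookprod_def by (simp add: hook_def prod_pos)

theorem lemma4p15:
  fixes lam mu nu :: "nat list"
  assumes "is_partition lam" and "mu \<in> Downs lam" and "nu \<in> Ups lam"
  shows "((\<lambda>q. gamma nu lam mu q q) \<longlongrightarrow> (real (hook lam (cmunu lam mu nu)))\<^sup>2) (at 1) \<and>
         ((\<lambda>q. Pfwd lam mu nu q q) \<longlongrightarrow>
           (real (hookprod lam))\<^sup>2 / (real (hookprod mu) * real (hookprod nu))
             * (1 / (real (hook lam (cmunu lam mu nu)))\<^sup>2)) (at 1) \<and>
         ((\<lambda>q. Pbwd lam mu nu q q) \<longlongrightarrow>
           (real (hookprod lam))\<^sup>2 / (real (hookprod mu) * real (hookprod nu))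
             * (1 / (real (hook lam (cmunu lam mu nu)))\<^sup>2)) (at 1)"
proof -
  have c1: "covers mu lam" and c2: "covers lam nu" using assms unfolding Downs_def Ups_def by auto
  obtain x1 y1 where d1: "cells lam - cells mu = {(x1,y1)}" using cover_struct[OF c1] by blast
  obtain x2 y2 where d2: "cells nu - cells lam = {(x2,y2)}" using cover_struct[OF c2] by blast
  note R1 = cover_rows[OF c1 d1] and R2 = cover_rows[OF c2 d2]
  have A: "expA nu lam mu = int x1 - int x2"
    unfolding expA_def cover_narm[OF c1 d1] cover_narm[OF c2 d2] using R1 R2 by auto
  have B: "expB nu lam mu = int y2 - int y1"
    unfolding expB_def cover_nleg[OF c1 d1] cover_nleg[OF c2 d2] using R1 R2 by auto
  define h where "h = hook lam (cmunu lam mu nu)"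
  have cm: "cmunu lam mu nu = (if (x1,y2) \<in> cells lam then (x1,y2) else (x2,y1))"
    unfolding cmunu_def d1 d2 by (simp add: Let_def)
  have pc1: "pcol lam x1 = y1" using cover_pcol(2)[OF c1 d1] .
  have pc2: "pcol lam x2 = y2 - 1" using cover_pcol(1)[OF c2 d2] .
  have cc: "x1 \<le> prow lam y2 \<longleftrightarrow> y2 \<le> y1" by (rule cover_cols(2)[OF c1 d1]) (use R2 in auto)
  have hA: "(int h)\<^sup>2 = (expA nu lam mu + expB nu lam mu)\<^sup>2"
  proof (cases "(x1,y2) \<in> cells lam")
    case True
    hence "x1 \<le> prow lam y2" unfolding cells_def by auto
    hence "int h = int x2 - int x1 + int y1 - int y2"
      using True cc R1 R2 pc1 unfolding h_def cm hook_def arm_def leg_def by auto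
    hence "int h = - (expA nu lam mu + expB nu lam mu)" unfolding A B by simp
    thus ?thesis by (simp only: power2_minus)
  next
    case False
    hence "\<not> x1 \<le> prow lam y2" unfolding cells_def using R1 R2 by auto
    hence "int h = int x1 - int x2 + int y2 - int y1"
      using False cc R1 R2 pc2 unfolding h_def cm hook_def arm_def leg_def by auto
    hence "int h = expA nu lam mu + expB nu lam mu" unfolding A B by simp
    thus ?thesis by simp
  qed
  have hpos: "real h > 0" unfolding h_def hook_def by simp
  have G: "((\<lambda>q. gamma nu lam mu q q) \<longlongrightarrow> (real h)\<^sup>2) (at 1)"
  proof -
    have "(real h)\<^sup>2 = (of_int (expA nu lam mu + expB nu lam mu))\<^sup>2"
      using arg_cong[OF hA, of "of_int :: int \<Rightarrow> real"] by simp
    thus ?thesis unfolding gamma_def Let_def using lim_gamma_aux by simp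
  qed
  have T: "((\<lambda>q::real. q powi (expB nu lam mu - 1)) \<longlongrightarrow> 1) (at 1)"
    using tendsto_power_int[OF tendsto_ident_at, of 1 "expB nu lam mu - 1"] by simp
  have Hp: "real (hookprod lam) > 0" "real (hookprod mu) > 0" "real (hookprod nu) > 0"
    using hookprod_pos by auto
  have val: "1 * (real (hookprod lam) / real (hookprod nu)) * (1 / (real (hookprod mu) / real (hookprod lam)))
       / (real h)\<^sup>2 = (real (hookprod lam))\<^sup>2 / (real (hookprod mu) * real (hookprod nu)) * (1 / (real h)\<^sup>2)"
    using Hp hpos by (simp add: field_simps power2_eq_square)
  have P1: "((\<lambda>q. Pfwd lam mu nu q q) \<longlongrightarrow>
     1 * (real (hookprod lam) / real (hookprod nu)) * (1 / (real (hookprod mu) / real (hookprod lam)))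
       / (real h)\<^sup>2) (at 1)"
    unfolding Pfwd_def beta_def
    by (intro tendsto_divide tendsto_mult T lim_alpha[OF c1] lim_alpha[OF c2] tendsto_const G)
       (use Hp hpos in auto)
  have P2: "((\<lambda>q. Pbwd lam mu nu q q) \<longlongrightarrow>
     1 * (real (hookprod lam) / real (hookprod nu)) * (1 / (real (hookprod mu) / real (hookprod lam)))
       / (real h)\<^sup>2) (at 1)"
    unfolding Pbwd_def betabar_def
    by (intro tendsto_divide tendsto_mult T lim_alpha[OF c1] lim_alpha[OF c2] tendsto_const G)
       (use Hp hpos in auto)
  show ?thesis using G P1[unfolded val] P2[unfolded val] unfolding h_def by blast
qed

end
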